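(* Let $\mathscr H$ be a complex Hilbert space and $\mathbf{X},\mathbf{Y},\mathbf{Z},\mathbf{W}\in\mathbb{B}(\mathscr H)^d$. Then $$w_e\left(\begin{bmatrix}\mathbf{X}&\mathbf{Y}\\\mathbf{Z}&\mathbf{W}\end{bmatrix}\right)\le\frac12\Big(w_e(\mathbf{X})+w_e(\mathbf{W})+\sqrt{(w_e(\mathbf{X})-w_e(\mathbf{W}))^2+(\|\mathbf{Y}\|+\|\mathbf{Z}\|)^2}\Big).$$
   Context: $\mathbb{B}(\mathscr H)$ denotes the bounded linear operators on $\mathscr H$. For $\mathbf{T}=(T_1,\dots,T_d)$: $w_e(\mathbf{T})=\sup\{(\sum_{k}|\langle T_kx,x\rangle|^2)^{1/2}: \|x\|=1\}$ and $\|\mathbf{T}\|=\sup\{(\sum_k\|T_kx\|^2)^{1/2}: \|x\|=1\}$. For $d$-tuples $\mathbf{X},\mathbf{Y},\mathbf{Z},\mathbf{W}$, $\begin{bmatrix}\mathbf{X}&\mathbf{Y}\\\mathbf{Z}&\mathbf{W}\end{bmatrix}$ denotes the $d$-tuple $\left(\begin{bmatrix}X_k&Y_k\\Z_k&W_k\end{bmatrix}\right)_{k=1}^d$ of operators on $\mathscr H\oplus\mathscr H$. *)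

theory Defs
  imports "HOL-Analysis.Analysis"
begin

class complex_vector = real_vector +
  fixes scaleC :: "complex \<Rightarrow> 'a \<Rightarrow> 'a" (infixr "*\<^sub>C" 75)
  assumes scaleC_add_right: "a *\<^sub>C (x + y) = a *\<^sub>C x + a *\<^sub>C y"
    and scaleC_add_left: "(a + b) *\<^sub>C x = a *\<^sub>C x + b *\<^sub>C x"
    and scaleC_scaleC: "a *\<^sub>C (b *\<^sub>C x) = (a * b) *\<^sub>C x"
    and scaleC_one: "1 *\<^sub>C x = x"
    and scaleR_scaleC: "scaleR r x = complex_of_real r *\<^sub>C x"

class complex_inner = complex_vector + real_normed_vector +
  fixes cinner :: "'a \<Rightarrow> 'a \<Rightarrow> complex"
  assumes cinner_commute: "cinner x y = cnj (cinner y x)"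
    and cinner_add_left: "cinner (x + y) z = cinner x z + cinner y z"
    and cinner_scaleC_left: "cinner (a *\<^sub>C x) y = cnj a * cinner x y"
    and cinner_ge_zero: "0 \<le> Re (cinner x x)"
    and cinner_eq_zero_iff: "cinner x x = 0 \<longleftrightarrow> x = 0"
    and norm_eq_sqrt_cinner: "norm x = sqrt (Re (cinner x x))"

class chilbert_space = complex_inner + complete_space

instantiation prod :: (complex_vector, complex_vector) complex_vector
begin
definition scaleC_prod_def: "c *\<^sub>C p = (c *\<^sub>C fst p, c *\<^sub>C snd p)"
instance
  by standard (auto simp: scaleC_prod_def scaleR_prod_def scaleC_add_right scaleC_add_left
      scaleC_scaleC scaleC_one scaleR_scaleC[symmetric])
end

instantiation prod :: (complex_inner, complex_inner) complex_inner
begin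
definition cinner_prod_def: "cinner p q = cinner (fst p) (fst q) + cinner (snd p) (snd q)"
instance
proof
  fix x y z :: "'a \<times> 'b" and a :: complex
  show "cinner x y = cnj (cinner y x)"
    by (simp add: cinner_prod_def cinner_commute[of "fst x"] cinner_commute[of "snd x"])
  show "cinner (x + y) z = cinner x z + cinner y z"
    by (simp add: cinner_prod_def cinner_add_left)
  show "cinner (a *\<^sub>C x) y = cnj a * cinner x y"
    by (simp add: cinner_prod_def scaleC_prod_def cinner_scaleC_left distrib_left)
  show "0 \<le> Re (cinner x x)"
    using cinner_ge_zero[of "fst x"] cinner_ge_zero[of "snd x"] by (simp add: cinner_prod_def)
  have ri: "\<And>u::'a. Im (cinner u u) = 0" "\<And>u::'b. Im (cinner u u) = 0"
  proof -
    fix u :: 'a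
    have "Im (cinner u u) = - Im (cinner u u)"
      using arg_cong[OF cinner_commute[of u u], of Im] by simp
    thus "Im (cinner u u) = 0" by simp
  next
    fix u :: 'b
    have "Im (cinner u u) = - Im (cinner u u)"
      using arg_cong[OF cinner_commute[of u u], of Im] by simp
    thus "Im (cinner u u) = 0" by simp
  qed
  show "cinner x x = 0 \<longleftrightarrow> x = 0"
  proof
    assume h: "cinner x x = 0"
    have "Re (cinner (fst x) (fst x)) + Re (cinner (snd x) (snd x)) = 0"
      using h by (simp add: cinner_prod_def complex_eq_iff)
    hence "Re (cinner (fst x) (fst x)) = 0" "Re (cinner (snd x) (snd x)) = 0"
      using cinner_ge_zero[of "fst x"] cinner_ge_zero[of "snd x"] by linarith+
    hence "cinner (fst x) (fst x) = 0" "cinner (snd x) (snd x) = 0"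
      using ri by (auto simp: complex_eq_iff)
    thus "x = 0" by (simp add: cinner_eq_zero_iff prod_eq_iff)
  next
    assume "x = 0" thus "cinner x x = 0"
      using cinner_eq_zero_iff[of "0::'a"] cinner_eq_zero_iff[of "0::'b"]
      by (simp add: cinner_prod_def)
  qed
  show "norm x = sqrt (Re (cinner x x))"
    using cinner_ge_zero[of "fst x"] cinner_ge_zero[of "snd x"]
    by (simp add: norm_prod_def cinner_prod_def norm_eq_sqrt_cinner)
qed
end

definition bounded_clinear :: "('a::complex_inner \<Rightarrow> 'b::complex_inner) \<Rightarrow> bool" where
  "bounded_clinear T \<longleftrightarrow> bounded_linear T \<and> (\<forall>c x. T (c *\<^sub>C x) = c *\<^sub>C T x)"

text \<open>A d-tuple of operators is a function nat => operator, only indices k < d matter.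
  The suprema are over unit vectors; 0 is inserted so that the (degenerate) case of the
  zero space gives 0 (all quantities are nonnegative, so this changes nothing otherwise).\<close>
definition euclid_numrad :: "nat \<Rightarrow> (nat \<Rightarrow> 'a::complex_inner \<Rightarrow> 'a) \<Rightarrow> real" where
  "euclid_numrad d T = Sup (insert 0
     {sqrt (\<Sum>k<d. (cmod (cinner (T k x) x))\<^sup>2) | x. norm x = 1})"

definition tuple_norm :: "nat \<Rightarrow> (nat \<Rightarrow> 'a::complex_inner \<Rightarrow> 'a) \<Rightarrow> real" where
  "tuple_norm d T = Sup (insert 0 {sqrt (\<Sum>k<d. (norm (T k x))\<^sup>2) | x. norm x = 1})"

definition block_tuple ::
  "(nat \<Rightarrow> 'a::complex_vector \<Rightarrow> 'a) \<Rightarrow> (nat \<Rightarrow> 'a \<Rightarrow> 'a) \<Rightarrow> (nat \<Rightarrow> 'a \<Rightarrow> 'a) \<Rightarrow>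
   (nat \<Rightarrow> 'a \<Rightarrow> 'a) \<Rightarrow> nat \<Rightarrow> 'a \<times> 'a \<Rightarrow> 'a \<times> 'a" where
  "block_tuple X Y Z W = (\<lambda>k p. (X k (fst p) + Y k (snd p), Z k (fst p) + W k (snd p)))"

end

theory Submission
  imports Defs
begin

lemma cnj_mult_self: "cnj c * c = complex_of_real ((cmod c)\<^sup>2)"
  by (metis complex_norm_square mult.commute)

lemma cinner_add_right: "cinner (x::'a::complex_inner) (y + z) = cinner x y + cinner x z"
  by (metis cinner_add_left cinner_commute complex_cnj_add)

lemma cinner_scaleC_right: "cinner (x::'a::complex_inner) (a *\<^sub>C y) = a * cinner x y"
  by (metis cinner_scaleC_left cinner_commute complex_cnj_cnj complex_cnj_mult)

lemma cinner_zero_left[simp]: "cinner (0::'a::complex_inner) y = 0"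
  using cinner_add_left[of "0::'a" 0 y] by simp

lemma cinner_zero_right[simp]: "cinner (x::'a::complex_inner) 0 = 0"
  using cinner_add_right[of x 0 0] by simp

lemma cinner_self: "cinner (x::'a::complex_inner) x = complex_of_real ((norm x)\<^sup>2)"
proof -
  have "Im (cinner x x) = - Im (cinner x x)"
    using arg_cong[OF cinner_commute[of x x], of Im] by simp
  hence "Im (cinner x x) = 0" by simp
  moreover have "Re (cinner x x) = (norm x)\<^sup>2"
    using norm_eq_sqrt_cinner[of x] cinner_ge_zero[of x] by simp
  ultimately show ?thesis by (simp add: complex_eq_iff)
qed

lemma norm_scaleC: "norm (a *\<^sub>C (x::'a::complex_inner)) = cmod a * norm x"
proof -
  have "cinner (a *\<^sub>C x) (a *\<^sub>C x) = cnj a * a * cinner x x"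
    by (simp add: cinner_scaleC_left cinner_scaleC_right)
  also have "\<dots> = complex_of_real ((cmod a * norm x)\<^sup>2)"
  proof -
    have "cnj a * a = complex_of_real ((cmod a)\<^sup>2)"
      by (rule cnj_mult_self)
    thus ?thesis by (simp add: cinner_self power_mult_distrib)
  qed
  finally have "(norm (a *\<^sub>C x))\<^sup>2 = (cmod a * norm x)\<^sup>2"
    by (metis cinner_self of_real_eq_iff)
  thus ?thesis by (simp add: power2_eq_iff_nonneg)
qed

lemma cauchy_schwarz: "cmod (cinner (x::'a::complex_inner) y) \<le> norm x * norm y"
proof (cases "y = 0")
  case True thus ?thesis by simp
next
  case False
  define c where "c = cinner x y"
  define s where "s = 1 / (norm y)\<^sup>2"
  have ny: "norm y > 0" using False by simp
  define t where "t = - complex_of_real s * cnj c"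
  have "cinner (x + t *\<^sub>C y) (x + t *\<^sub>C y)
     = cinner x x + t * c + cnj t * cnj c + cnj t * t * cinner y y"
    by (simp add: cinner_add_left cinner_add_right cinner_scaleC_left cinner_scaleC_right
        c_def cinner_commute[of y x] algebra_simps)
  moreover have "t * c = - complex_of_real (s * (cmod c)\<^sup>2)"
    using cnj_mult_self[of c] by (simp add: t_def mult.assoc del: of_real_power)
  moreover have "cnj t * cnj c = - complex_of_real (s * (cmod c)\<^sup>2)"
    using cnj_mult_self[of c] by (simp add: t_def mult.commute mult.left_commute del: of_real_power)
  moreover have "cnj t * t = complex_of_real (s\<^sup>2 * (cmod c)\<^sup>2)"
    using cnj_mult_self[of c] by (simp add: t_def mult.commute mult.left_commute power2_eq_square del: of_real_power)
  ultimately have "Re (cinner (x + t *\<^sub>C y) (x + t *\<^sub>C y))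
     = (norm x)\<^sup>2 - 2 * s * (cmod c)\<^sup>2 + s\<^sup>2 * (cmod c)\<^sup>2 * (norm y)\<^sup>2"
    by (simp add: cinner_self)
  also have "\<dots> = (norm x)\<^sup>2 - (cmod c)\<^sup>2 / (norm y)\<^sup>2"
    using ny by (simp add: s_def field_simps power2_eq_square)
  finally have "0 \<le> (norm x)\<^sup>2 - (cmod c)\<^sup>2 / (norm y)\<^sup>2"
    by (metis cinner_ge_zero)
  hence "(cmod c)\<^sup>2 \<le> (norm x * norm y)\<^sup>2"
    using ny by (simp add: field_simps power_mult_distrib)
  thus ?thesis unfolding c_def
    by (meson abs_le_square_iff abs_of_nonneg norm_ge_zero order_trans abs_ge_self
        mult_nonneg_nonneg power2_le_imp_le)
qed


lemma tuple_bound: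
  fixes T :: "nat \<Rightarrow> 'a::real_normed_vector \<Rightarrow> 'b::real_normed_vector"
  assumes "\<forall>k<d. bounded_linear (T k)"
  shows "\<exists>B\<ge>0. \<forall>x. norm x = 1 \<longrightarrow> L2_set (\<lambda>k. norm (T k x)) {..<d} \<le> B"
proof -
  have "\<forall>k. \<exists>K. k < d \<longrightarrow> (\<forall>x. norm (T k x) \<le> norm x * K)"
    using assms bounded_linear.bounded by blast
  then obtain K where K: "\<And>k x. k < d \<Longrightarrow> norm (T k x) \<le> norm x * K k" by metis
  show ?thesis
  proof (intro exI[of _ "L2_set K {..<d}"] conjI allI impI)
    show "0 \<le> L2_set K {..<d}" by simp
    fix x :: 'a assume "norm x = 1"
    thus "L2_set (\<lambda>k. norm (T k x)) {..<d} \<le> L2_set K {..<d}"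
      using K by (intro L2_set_mono) (auto, metis mult_1)
  qed
qed

lemma bdd_tnorm:
  fixes T :: "nat \<Rightarrow> 'a::real_normed_vector \<Rightarrow> 'b::real_normed_vector"
  assumes "\<forall>k<d. bounded_linear (T k)"
  shows "bdd_above (insert 0 {sqrt (\<Sum>k<d. (norm (T k x))\<^sup>2) | x. norm x = 1})"
proof -
  obtain B where B: "\<And>x. norm x = 1 \<Longrightarrow> L2_set (\<lambda>k. norm (T k x)) {..<d} \<le> B" "B \<ge> 0"
    using tuple_bound[OF assms] by blast
  show ?thesis unfolding bdd_above_def
    using B by (intro exI[of _ B]) (auto simp: L2_set_def)
qed

lemma bdd_numrad:
  fixes T :: "nat \<Rightarrow> 'a::complex_inner \<Rightarrow> 'a"
  assumes "\<forall>k<d. bounded_linear (T k)"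
  shows "bdd_above (insert 0 {sqrt (\<Sum>k<d. (cmod (cinner (T k x) x))\<^sup>2) | x. norm x = 1})"
proof -
  obtain B where B: "\<And>x. norm x = 1 \<Longrightarrow> L2_set (\<lambda>k. norm (T k x)) {..<d} \<le> B" "B \<ge> 0"
    using tuple_bound[OF assms] by blast
  have "L2_set (\<lambda>k. cmod (cinner (T k x) x)) {..<d} \<le> B" if "norm x = 1" for x
  proof -
    have "L2_set (\<lambda>k. cmod (cinner (T k x) x)) {..<d} \<le> L2_set (\<lambda>k. norm (T k x)) {..<d}"
      using cauchy_schwarz[of "T _ x" x] that by (intro L2_set_mono) auto
    thus ?thesis using B(1)[OF that] by linarith
  qed
  thus ?thesis unfolding bdd_above_def
    using B by (intro exI[of _ B]) (auto simp: L2_set_def)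
qed

lemma clinear_scale:
  assumes "bounded_clinear T"
  shows "T (c *\<^sub>C x) = c *\<^sub>C T x"
  using assms unfolding bounded_clinear_def by blast

lemma unit_decomp:
  fixes x :: "'a::complex_inner"
  assumes "x \<noteq> 0"
  obtains u where "norm u = 1" "x = complex_of_real (norm x) *\<^sub>C u"
proof -
  define u where "u = complex_of_real (1 / norm x) *\<^sub>C x"
  have "norm u = 1" using assms by (simp add: u_def norm_scaleC norm_divide)
  moreover have "x = complex_of_real (norm x) *\<^sub>C u"
    using assms by (simp add: u_def scaleC_scaleC scaleC_one flip: of_real_mult)
  ultimately show ?thesis using that by blast
qed

lemma numrad_nonneg:
  assumes "\<forall>k<d. bounded_clinear (T k)"
  shows "0 \<le> euclid_numrad d T"
proof -
  have "\<forall>k<d. bounded_linear (T k)" using assms bounded_clinear_def by blast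
  thus ?thesis unfolding euclid_numrad_def by (intro cSup_upper bdd_numrad) auto
qed

lemma tnorm_nonneg:
  assumes "\<forall>k<d. bounded_clinear (T k)"
  shows "0 \<le> tuple_norm d T"
proof -
  have "\<forall>k<d. bounded_linear (T k)" using assms bounded_clinear_def by blast
  thus ?thesis unfolding tuple_norm_def by (intro cSup_upper bdd_tnorm) auto
qed

lemma numrad_upper:
  fixes T :: "nat \<Rightarrow> 'a::complex_inner \<Rightarrow> 'a"
  assumes "\<forall>k<d. bounded_clinear (T k)"
  shows "L2_set (\<lambda>k. cmod (cinner (T k x) x)) {..<d} \<le> euclid_numrad d T * (norm x)\<^sup>2"
proof (cases "x = 0")
  case True
  have "T k 0 = 0" if "k < d" for k
    using assms that unfolding bounded_clinear_def by (auto intro: linear_simps)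
  hence "L2_set (\<lambda>k. cmod (cinner (T k x) x)) {..<d} = 0"
    using True by (intro L2_set_0') auto
  thus ?thesis using True by simp
next
  case False
  obtain u where u: "norm u = 1" "x = complex_of_real (norm x) *\<^sub>C u"
    using unit_decomp[OF False] by blast
  have lin: "\<forall>k<d. bounded_linear (T k)" using assms bounded_clinear_def by blast
  have "cmod (cinner (T k x) x) = (norm x)\<^sup>2 * cmod (cinner (T k u) u)" if "k < d" for k
  proof -
    have "cinner (T k x) x = complex_of_real ((norm x)\<^sup>2) * cinner (T k u) u"
      using clinear_scale[of "T k"] assms that
      by (subst (1 2) u(2)) (simp add: cinner_scaleC_left cinner_scaleC_right power2_eq_square)
    thus ?thesis by (simp add: norm_mult norm_power)
  qed
  hence "L2_set (\<lambda>k. cmod (cinner (T k x) x)) {..<d}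
      = L2_set (\<lambda>k. (norm x)\<^sup>2 * cmod (cinner (T k u) u)) {..<d}"
    by (intro L2_set_cong) auto
  also have "\<dots> = (norm x)\<^sup>2 * L2_set (\<lambda>k. cmod (cinner (T k u) u)) {..<d}"
    by (simp add: L2_set_right_distrib)
  finally have e: "L2_set (\<lambda>k. cmod (cinner (T k x) x)) {..<d} = (norm x)\<^sup>2 * L2_set (\<lambda>k. cmod (cinner (T k u) u)) {..<d}" .
  have "L2_set (\<lambda>k. cmod (cinner (T k u) u)) {..<d} \<le> euclid_numrad d T"
    unfolding euclid_numrad_def using u(1)
    by (intro cSup_upper bdd_numrad lin) (auto simp: L2_set_def)
  hence "(norm x)\<^sup>2 * L2_set (\<lambda>k. cmod (cinner (T k u) u)) {..<d} \<le> (norm x)\<^sup>2 * euclid_numrad d T"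
    by (intro mult_left_mono) auto
  with e show ?thesis by (simp add: mult.commute)
qed

lemma tnorm_upper:
  fixes T :: "nat \<Rightarrow> 'a::complex_inner \<Rightarrow> 'a"
  assumes "\<forall>k<d. bounded_clinear (T k)"
  shows "L2_set (\<lambda>k. norm (T k x)) {..<d} \<le> tuple_norm d T * norm x"
proof (cases "x = 0")
  case True
  have "T k 0 = 0" if "k < d" for k
    using assms that unfolding bounded_clinear_def by (auto intro: linear_simps)
  hence "L2_set (\<lambda>k. norm (T k x)) {..<d} = 0"
    using True by (intro L2_set_0') auto
  thus ?thesis using True by simp
next
  case False
  obtain u where u: "norm u = 1" "x = complex_of_real (norm x) *\<^sub>C u"
    using unit_decomp[OF False] by blast
  have lin: "\<forall>k<d. bounded_linear (T k)" using assms bounded_clinear_def by blast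
  have "norm (T k x) = norm x * norm (T k u)" if "k < d" for k
    using clinear_scale[of "T k"] assms that
    by (subst u(2)) (simp add: norm_scaleC)
  hence "L2_set (\<lambda>k. norm (T k x)) {..<d} = L2_set (\<lambda>k. norm x * norm (T k u)) {..<d}"
    by (intro L2_set_cong) auto
  also have "\<dots> = norm x * L2_set (\<lambda>k. norm (T k u)) {..<d}"
    by (simp add: L2_set_right_distrib)
  moreover have "L2_set (\<lambda>k. norm (T k u)) {..<d} \<le> tuple_norm d T"
    unfolding tuple_norm_def using u(1)
    by (intro cSup_upper bdd_tnorm lin) (auto simp: L2_set_def)
  ultimately show ?thesis by (simp add: mult.commute mult_left_mono)
qed

lemma quad_bound:
  fixes p q r a b :: real
  assumes "0 \<le> r" "0 \<le> a" "0 \<le> b" "a\<^sup>2 + b\<^sup>2 = 1"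
  shows "p * a\<^sup>2 + q * b\<^sup>2 + r * (a * b) \<le> 1/2 * (p + q + sqrt ((p - q)\<^sup>2 + r\<^sup>2))"
proof -
  define s where "s = sqrt ((p - q)\<^sup>2 + r\<^sup>2)"
  have s2: "s\<^sup>2 = (p - q)\<^sup>2 + r\<^sup>2" unfolding s_def by simp
  have s0: "s \<ge> 0" unfolding s_def by simp
  have "\<bar>p - q\<bar> \<le> s" unfolding s_def by (metis abs_le_square_iff less_eq_real_def not_le real_sqrt_abs real_sqrt_le_mono le_add_same_cancel1 zero_le_power2)
  hence A: "q - p + s \<ge> 0" and B: "p - q + s \<ge> 0" by linarith+
  define A' where "A' = q - p + s"
  define B' where "B' = p - q + s"
  have AB: "A' * B' = r\<^sup>2" unfolding A'_def B'_def using s2 by (simp add: algebra_simps power2_eq_square)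
  have key: "A' * a\<^sup>2 + B' * b\<^sup>2 - 2 * r * (a * b) \<ge> 0"
  proof (cases "A' = 0")
    case True
    hence "r = 0" using AB assms by simp
    thus ?thesis using True B B'_def by simp
  next
    case False
    hence Ap: "A' > 0" using A A'_def by simp
    have "A' * (A' * a\<^sup>2 + B' * b\<^sup>2 - 2 * r * (a * b)) = (A' * a - r * b)\<^sup>2"
      using AB by (simp add: algebra_simps power2_eq_square)
    hence "A' * (A' * a\<^sup>2 + B' * b\<^sup>2 - 2 * r * (a * b)) \<ge> 0" by simp
    thus ?thesis using Ap by (simp add: zero_le_mult_iff)
  qed
  have "1/2 * (p + q + s) = 1/2 * (p + q + s) * (a\<^sup>2 + b\<^sup>2)" using assms by simp
  thus ?thesis using key unfolding A'_def B'_def s_def[symmetric] by (simp add: algebra_simps) (simp add: field_simps; linarith)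
qed

theorem corollary3p5:
  fixes X Y Z W :: "nat \<Rightarrow> 'h::chilbert_space \<Rightarrow> 'h" and d :: nat
  assumes "\<forall>k<d. bounded_clinear (X k)" and "\<forall>k<d. bounded_clinear (Y k)"
    and "\<forall>k<d. bounded_clinear (Z k)" and "\<forall>k<d. bounded_clinear (W k)"
  shows "euclid_numrad d (block_tuple X Y Z W)
    \<le> 1/2 * (euclid_numrad d X + euclid_numrad d W
       + sqrt ((euclid_numrad d X - euclid_numrad d W)\<^sup>2 + (tuple_norm d Y + tuple_norm d Z)\<^sup>2))"
proof -
  define p where "p = euclid_numrad d X"
  define q where "q = euclid_numrad d W"
  define r where "r = tuple_norm d Y + tuple_norm d Z"
  define R where "R = 1/2 * (p + q + sqrt ((p - q)\<^sup>2 + r\<^sup>2))"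
  have p0: "p \<ge> 0" unfolding p_def using numrad_nonneg assms(1) by blast
  have q0: "q \<ge> 0" unfolding q_def using numrad_nonneg assms(4) by blast
  have r0: "r \<ge> 0" unfolding r_def using tnorm_nonneg[OF assms(2)] tnorm_nonneg[OF assms(3)] by simp
  have R0: "R \<ge> 0"
  proof -
    have "0 \<le> sqrt ((p - q)\<^sup>2 + r\<^sup>2)" by simp
    thus ?thesis unfolding R_def using p0 q0 by (intro mult_nonneg_nonneg add_nonneg_nonneg) auto
  qed
  have elem: "sqrt (\<Sum>k<d. (cmod (cinner (block_tuple X Y Z W k v) v))\<^sup>2) \<le> R"
    if nv: "norm v = 1" for v :: "'h \<times> 'h"
  proof -
    obtain x y where v: "v = (x, y)" by (cases v)
    define a where "a = norm x"
    define b where "b = norm y"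
    have a0: "a \<ge> 0" and b0: "b \<ge> 0" unfolding a_def b_def by simp_all
    have ab: "a\<^sup>2 + b\<^sup>2 = 1" using nv unfolding v a_def b_def norm_prod_def
      by simp
    define \<alpha> where "\<alpha> k = cinner (X k x) x" for k
    define \<beta> where "\<beta> k = cinner (Y k y) x" for k
    define \<gamma> where "\<gamma> k = cinner (Z k x) y" for k
    define \<delta> where "\<delta> k = cinner (W k y) y" for k
    have ck: "cinner (block_tuple X Y Z W k v) v = \<alpha> k + \<beta> k + \<gamma> k + \<delta> k" for k
      by (simp add: v block_tuple_def cinner_prod_def cinner_add_left \<alpha>_def \<beta>_def \<gamma>_def \<delta>_def)
    have "sqrt (\<Sum>k<d. (cmod (cinner (block_tuple X Y Z W k v) v))\<^sup>2)
        = L2_set (\<lambda>k. cmod (\<alpha> k + \<beta> k + \<gamma> k + \<delta> k)) {..<d}"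
      by (simp add: L2_set_def ck)
    also have "\<dots> \<le> L2_set (\<lambda>k. cmod (\<alpha> k) + cmod (\<beta> k) + cmod (\<gamma> k) + cmod (\<delta> k)) {..<d}"
    proof (rule L2_set_mono)
      fix k
      show "cmod (\<alpha> k + \<beta> k + \<gamma> k + \<delta> k) \<le> cmod (\<alpha> k) + cmod (\<beta> k) + cmod (\<gamma> k) + cmod (\<delta> k)"
        using norm_triangle_ineq[of "\<alpha> k + \<beta> k + \<gamma> k" "\<delta> k"]
          norm_triangle_ineq[of "\<alpha> k + \<beta> k" "\<gamma> k"] norm_triangle_ineq[of "\<alpha> k" "\<beta> k"]
        by linarith
    qed simp
    also have "\<dots> \<le> L2_set (\<lambda>k. cmod (\<alpha> k)) {..<d} + L2_set (\<lambda>k. cmod (\<beta> k)) {..<d}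
        + L2_set (\<lambda>k. cmod (\<gamma> k)) {..<d} + L2_set (\<lambda>k. cmod (\<delta> k)) {..<d}"
      using L2_set_triangle_ineq[of "\<lambda>k. cmod (\<alpha> k) + cmod (\<beta> k) + cmod (\<gamma> k)" "\<lambda>k. cmod (\<delta> k)" "{..<d}"]
        L2_set_triangle_ineq[of "\<lambda>k. cmod (\<alpha> k) + cmod (\<beta> k)" "\<lambda>k. cmod (\<gamma> k)" "{..<d}"]
        L2_set_triangle_ineq[of "\<lambda>k. cmod (\<alpha> k)" "\<lambda>k. cmod (\<beta> k)" "{..<d}"]
      by linarith
    also have "\<dots> \<le> p * a\<^sup>2 + tuple_norm d Y * b * a + tuple_norm d Z * a * b + q * b\<^sup>2"
    proof -
      have 1: "L2_set (\<lambda>k. cmod (\<alpha> k)) {..<d} \<le> p * a\<^sup>2"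
        unfolding \<alpha>_def p_def a_def by (rule numrad_upper[OF assms(1)])
      have 4: "L2_set (\<lambda>k. cmod (\<delta> k)) {..<d} \<le> q * b\<^sup>2"
        unfolding \<delta>_def q_def b_def by (rule numrad_upper[OF assms(4)])
      have "L2_set (\<lambda>k. cmod (\<beta> k)) {..<d} \<le> L2_set (\<lambda>k. norm (Y k y) * a) {..<d}"
        unfolding \<beta>_def a_def using cauchy_schwarz by (intro L2_set_mono) auto
      also have "\<dots> = L2_set (\<lambda>k. norm (Y k y)) {..<d} * a"
        using a0 by (simp add: L2_set_left_distrib)
      also have "\<dots> \<le> tuple_norm d Y * b * a"
        using tnorm_upper[OF assms(2), of y] a0 unfolding b_def by (intro mult_right_mono) auto
      finally have 2: "L2_set (\<lambda>k. cmod (\<beta> k)) {..<d} \<le> tuple_norm d Y * b * a" .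
      have "L2_set (\<lambda>k. cmod (\<gamma> k)) {..<d} \<le> L2_set (\<lambda>k. norm (Z k x) * b) {..<d}"
        unfolding \<gamma>_def b_def using cauchy_schwarz by (intro L2_set_mono) auto
      also have "\<dots> = L2_set (\<lambda>k. norm (Z k x)) {..<d} * b"
        using b0 by (simp add: L2_set_left_distrib)
      also have "\<dots> \<le> tuple_norm d Z * a * b"
        using tnorm_upper[OF assms(3), of x] b0 unfolding a_def by (intro mult_right_mono) auto
      finally have 3: "L2_set (\<lambda>k. cmod (\<gamma> k)) {..<d} \<le> tuple_norm d Z * a * b" .
      show ?thesis using 1 2 3 4 by linarith
    qed
    also have "\<dots> = p * a\<^sup>2 + q * b\<^sup>2 + r * (a * b)"
      unfolding r_def by (simp add: algebra_simps)
    also have "\<dots> \<le> R" unfolding R_def by (rule quad_bound[OF r0 a0 b0 ab])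
    finally show ?thesis .
  qed
  have "euclid_numrad d (block_tuple X Y Z W) \<le> R"
    unfolding euclid_numrad_def[of d "block_tuple X Y Z W"]
    using R0 elem by (intro cSup_least) auto
  thus ?thesis unfolding R_def p_def q_def r_def .
qed

end
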